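(* Let $n \ge 1$ and let $k,\ell \ge 0$ be integers with $k+\ell \le n$. The number of rooted trees on the vertex set $[n+1]=\{1,\ldots,n+1\}$ in which the root has exactly $k$ children that are smaller than the root and exactly $\ell$ children that are larger than the root equals $$\binom{n+1}{k+\ell+1}\,(k+\ell)\,n^{\,n-k-\ell-1}.$$
   Context: A rooted tree on a vertex set $V$ is a tree with vertex set $V$ together with a distinguished vertex (the root); the children of the root are the vertices adjacent to it. Vertices are compared by their integer labels. *)

theory Defs
  imports Complex_Main
begin

definition simple_graph :: "'a set \<Rightarrow> 'a set set \<Rightarrow> bool" where
  "simple_graph V E \<longleftrightarrow> (\<forall>e\<in>E. \<exists>u v. u \<in> V \<and> v \<in> V \<and> u \<noteq> v \<and> e = {u, v})"

definition adj :: "'a set set \<Rightarrow> 'a \<Rightarrow> 'a \<Rightarrow> bool" where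
  "adj E u v \<longleftrightarrow> {u, v} \<in> E"

definition connected_graph :: "'a set \<Rightarrow> 'a set set \<Rightarrow> bool" where
  "connected_graph V E \<longleftrightarrow> (\<forall>u\<in>V. \<forall>v\<in>V. (adj E)\<^sup>*\<^sup>* u v)"

definition is_cycle :: "'a set set \<Rightarrow> 'a list \<Rightarrow> bool" where
  "is_cycle E cs \<longleftrightarrow> length cs \<ge> 3 \<and> distinct cs \<and>
     (\<forall>i. Suc i < length cs \<longrightarrow> adj E (cs ! i) (cs ! Suc i)) \<and>
     adj E (last cs) (hd cs)"

definition acyclic_graph :: "'a set set \<Rightarrow> bool" where
  "acyclic_graph E \<longleftrightarrow> \<not> (\<exists>cs. is_cycle E cs)"

definition is_tree :: "'a set \<Rightarrow> 'a set set \<Rightarrow> bool" where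
  "is_tree V E \<longleftrightarrow> simple_graph V E \<and> connected_graph V E \<and> acyclic_graph E"

definition rooted_trees :: "'a set \<Rightarrow> ('a set set \<times> 'a) set" where
  "rooted_trees V = {(E, r). is_tree V E \<and> r \<in> V}"

definition children :: "'a set set \<Rightarrow> 'a \<Rightarrow> 'a set" where
  "children E r = {c. {r, c} \<in> E}"

end

theory Submission
  imports Defs
begin


definition forest :: "'a set \<Rightarrow> 'a set \<Rightarrow> ('a \<Rightarrow> 'a) \<Rightarrow> bool" where
 "forest A S p \<longleftrightarrow> (\<forall>v. v \<notin> A - S \<longrightarrow> p v = v) \<and> (\<forall>v\<in>A - S. p v \<in> A)
     \<and> (\<forall>v\<in>A. \<exists>k. (p^^k) v \<in> S)"

lemma forest_split_bij:
  assumes "s \<in> S" "I \<subseteq> A - S" "S \<subseteq> A"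
  shows "bij_betw (\<lambda>p v. if v \<in> I then v else p v)
           {p. forest A S p \<and> {v\<in>A - S. p v = s} = I}
           {q. forest (A - {s}) (S - {s} \<union> I) q}"
proof (rule bij_betw_byWitness[where f'="\<lambda>q v. if v \<in> I then s else q v"])
  show "\<forall>p\<in>{p. forest A S p \<and> {v\<in>A - S. p v = s} = I}.
     (\<lambda>v. if v \<in> I then s else (if v \<in> I then v else p v)) = p"
    by (auto simp: fun_eq_iff)
  show "\<forall>q\<in>{q. forest (A - {s}) (S - {s} \<union> I) q}.
     (\<lambda>v. if v \<in> I then v else (if v \<in> I then s else q v)) = q"
    by (auto simp: fun_eq_iff forest_def)
  show "(\<lambda>p v. if v \<in> I then v else p v) ` {p. forest A S p \<and> {v\<in>A - S. p v = s} = I}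
        \<subseteq> {q. forest (A - {s}) (S - {s} \<union> I) q}"
  proof (rule image_subsetI, simp only: mem_Collect_eq)
    fix p assume "forest A S p \<and> {v\<in>A - S. p v = s} = I"
    then have fp: "forest A S p" and I: "I = {v\<in>A - S. p v = s}" by auto
    define q where "q = (\<lambda>v. if v \<in> I then v else p v)"
    have r: "\<exists>j. (q^^j) v \<in> S - {s} \<union> I" if "(p^^k) v \<in> S" "v \<in> A - {s}" for k v
      using that
    proof (induction k arbitrary: v)
      case 0 then show ?case by (intro exI[of _ 0]) auto
    next
      case (Suc k)
      show ?case
      proof (cases "v \<in> S - {s} \<union> I")
        case True then show ?thesis by (intro exI[of _ 0]) auto
      next
        case False
        then have v: "v \<in> A - S" "v \<notin> I" using Suc.prems \<open>s \<in> S\<close> by auto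
        then have qv: "q v = p v" and pv: "p v \<in> A" "p v \<noteq> s"
          using fp I by (auto simp: q_def forest_def)
        have "(p^^k) (p v) \<in> S" using Suc.prems by (simp add: funpow_Suc_right del: funpow.simps)
        then obtain j where "(q^^j) (p v) \<in> S - {s} \<union> I" using Suc.IH pv by blast
        then have "(q^^(Suc j)) v \<in> S - {s} \<union> I" using qv by (simp add: funpow_Suc_right del: funpow.simps)
        then show ?thesis by blast
      qed
    qed
    have "forest (A - {s}) (S - {s} \<union> I) q"
      unfolding forest_def
    proof (intro conjI allI ballI impI)
      fix v assume "v \<notin> A - {s} - (S - {s} \<union> I)"
      then show "q v = v" using fp \<open>s \<in> S\<close> by (auto simp: q_def forest_def)
    next
      fix v assume "v \<in> A - {s} - (S - {s} \<union> I)"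
      then show "q v \<in> A - {s}" using fp I by (auto simp: q_def forest_def)
    next
      fix v assume "v \<in> A - {s}"
      then obtain k where "(p^^k) v \<in> S" using fp by (auto simp: forest_def)
      then show "\<exists>k. (q^^k) v \<in> S - {s} \<union> I" using r \<open>v \<in> A - {s}\<close> by blast
    qed
    then show "forest (A - {s}) (S - {s} \<union> I) (\<lambda>v. if v \<in> I then v else p v)" by (simp add: q_def)
  qed
  show "(\<lambda>q v. if v \<in> I then s else q v) ` {q. forest (A - {s}) (S - {s} \<union> I) q}
        \<subseteq> {p. forest A S p \<and> {v\<in>A - S. p v = s} = I}"
  proof (rule image_subsetI, simp only: mem_Collect_eq)
    fix q assume fq: "forest (A - {s}) (S - {s} \<union> I) q"
    define p where "p = (\<lambda>v. if v \<in> I then s else q v)"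
    have r: "\<exists>j. (p^^j) v \<in> S" if "(q^^k) v \<in> S - {s} \<union> I" "v \<in> A - {s}" for k v
      using that
    proof (induction k arbitrary: v)
      case 0 
      show ?case
      proof (cases "v \<in> I")
        case True then have "(p^^1) v \<in> S" using \<open>s \<in> S\<close> by (simp add: p_def)
        then show ?thesis by blast
      next
        case False then show ?thesis using 0 by (intro exI[of _ 0]) auto
      qed
    next
      case (Suc k)
      show ?case
      proof (cases "v \<in> S \<union> I")
        case True
        show ?thesis
        proof (cases "v \<in> I")
          case True then have "(p^^1) v \<in> S" using \<open>s \<in> S\<close> by (simp add: p_def)
          then show ?thesis by blast
        next
          case False then show ?thesis using \<open>v \<in> S \<union> I\<close> by (intro exI[of _ 0]) auto
        qed
      next
        case False
        then have v: "v \<in> A - {s} - (S - {s} \<union> I)" using Suc.prems by auto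
        then have pv: "p v = q v" "q v \<in> A - {s}" using fq by (auto simp: p_def forest_def)
        have "(q^^k) (q v) \<in> S - {s} \<union> I" using Suc.prems by (simp add: funpow_Suc_right del: funpow.simps)
        then obtain j where "(p^^j) (q v) \<in> S" using Suc.IH pv by blast
        then have "(p^^(Suc j)) v \<in> S" using pv by (simp add: funpow_Suc_right del: funpow.simps)
        then show ?thesis by blast
      qed
    qed
    have "forest A S p"
      unfolding forest_def
    proof (intro conjI allI ballI impI)
      fix v assume "v \<notin> A - S"
      then show "p v = v" using fq \<open>I \<subseteq> A - S\<close> by (auto simp: p_def forest_def)
    next
      fix v assume "v \<in> A - S"
      then show "p v \<in> A" using fq \<open>s \<in> S\<close> \<open>I \<subseteq> A - S\<close> \<open>S \<subseteq> A\<close> by (auto simp: p_def forest_def)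
    next
      fix v assume "v \<in> A"
      show "\<exists>k. (p^^k) v \<in> S"
      proof (cases "v = s")
        case True then show ?thesis using \<open>s \<in> S\<close> by (intro exI[of _ 0]) auto
      next
        case False
        then have "v \<in> A - {s}" using \<open>v \<in> A\<close> by simp
        from bspec[OF fq[unfolded forest_def, THEN conjunct2, THEN conjunct2], OF this] obtain k where "(q^^k) v \<in> S - {s} \<union> I" ..
        then show ?thesis by (rule r[OF _ \<open>v \<in> A - {s}\<close>])
      qed
    qed
    moreover have "{v \<in> A - S. p v = s} = I"
    proof -
      have qr: "\<forall>v\<in>A - {s} - (S - {s} \<union> I). q v \<in> A - {s}"
        using fq[unfolded forest_def, THEN conjunct2, THEN conjunct1] .
      show ?thesis using qr \<open>I \<subseteq> A - S\<close> \<open>s \<in> S\<close> by (auto simp: p_def)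
    qed
    ultimately show "forest A S (\<lambda>v. if v \<in> I then s else q v) \<and> {v \<in> A - S. (if v \<in> I then s else q v) = s} = I"
      by (simp add: p_def)
  qed
qed

lemma forestD1: "forest A S p \<Longrightarrow> v \<notin> A - S \<Longrightarrow> p v = v"
  unfolding forest_def by blast
lemma forestD2: "forest A S p \<Longrightarrow> v \<in> A - S \<Longrightarrow> p v \<in> A"
  unfolding forest_def by blast
lemma forestD3: "forest A S p \<Longrightarrow> v \<in> A \<Longrightarrow> \<exists>k. (p^^k) v \<in> S"
  unfolding forest_def by blast

lemma forest_finite:
  assumes "finite A"
  shows "finite {p. forest A S p}"
proof -
  have inj: "inj_on (\<lambda>p v. if v \<in> A then p v else undefined) {p. forest A S p}"
  proof (rule inj_onI)
    fix p q assume p: "p \<in> {p. forest A S p}" and q: "q \<in> {p. forest A S p}"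
      and e: "(\<lambda>v. if v \<in> A then p v else undefined) = (\<lambda>v. if v \<in> A then q v else undefined)"
    show "p = q"
    proof
      fix v show "p v = q v"
      proof (cases "v \<in> A")
        case True
        have "(if v \<in> A then p v else undefined) = (if v \<in> A then q v else undefined)" using fun_cong[OF e, of v] by simp
        with True show ?thesis by simp
      next
        case False
        then have "p v = v" "q v = v" using p q forestD1[of A S _ v] by auto
        then show ?thesis by simp
      qed
    qed
  qed
  have "(\<lambda>p v. if v \<in> A then p v else undefined) ` {p. forest A S p} \<subseteq> {f. \<forall>x. (x \<in> A \<longrightarrow> f x \<in> A) \<and> (x \<notin> A \<longrightarrow> f x = undefined)}"
  proof (rule image_subsetI)
    fix p assume "p \<in> {p. forest A S p}"
    then have fp: "forest A S p" by simp
    have "p v \<in> A" if "v \<in> A" for v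
      using that forestD1[OF fp] forestD2[OF fp] by (cases "v \<in> S") auto
    then show "(\<lambda>v. if v \<in> A then p v else undefined) \<in> {f. \<forall>x. (x \<in> A \<longrightarrow> f x \<in> A) \<and> (x \<notin> A \<longrightarrow> f x = undefined)}" by auto
  qed
  then have "finite ((\<lambda>p v. if v \<in> A then p v else undefined) ` {p. forest A S p})"
    using finite_set_of_finite_funs[OF assms assms, of undefined] finite_subset by blast
  then show ?thesis using finite_imageD inj by blast
qed

definition fcount :: "nat \<Rightarrow> nat \<Rightarrow> nat" where
  "fcount N D = (if D = N then 1 else D * N ^ (N - D - 1))"

lemma sum_pow_card:
  assumes "finite B"
  shows "(\<Sum>I\<in>Pow B. g (card I)) = (\<Sum>i\<le>card B. (card B choose i) * g i)"
proof -
  have "(\<Sum>I\<in>Pow B. g (card I)) = (\<Sum>i\<le>card B. \<Sum>I\<in>{I\<in>Pow B. card I = i}. g (card I))"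
    by (rule sum.group[symmetric]) (use assms card_mono in auto)
  also have "\<dots> = (\<Sum>i\<le>card B. (card B choose i) * g i)"
  proof (rule sum.cong[OF refl])
    fix i
    have "(\<Sum>I\<in>{I\<in>Pow B. card I = i}. g (card I)) = (\<Sum>I\<in>{I\<in>Pow B. card I = i}. g i)"
      by (rule sum.cong) auto
    also have "\<dots> = card {I\<in>Pow B. card I = i} * g i" by simp
    also have "{I\<in>Pow B. card I = i} = {I. I \<subseteq> B \<and> card I = i}" by auto
    finally show "(\<Sum>I\<in>{I\<in>Pow B. card I = i}. g (card I)) = (card B choose i) * g i"
      using n_subsets[OF assms] by simp
  qed
  finally show ?thesis .
qed

lemma binom1: "(\<Sum>i\<le>m. (m choose i) * x ^ (m - i)) = (x + 1::nat) ^ m"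
  using binomial[of 1 x m] by (simp add: add.commute)

lemma binom2: "(\<Sum>i\<le>m. (m choose i) * i * x ^ (m - i)) = m * (x + 1::nat) ^ (m - 1)"
proof (cases m)
  case 0 then show ?thesis by simp
next
  case (Suc m')
  have "(\<Sum>i\<le>m. (m choose i) * i * x ^ (m - i)) = (\<Sum>i\<le>m'. (Suc m' choose Suc i) * Suc i * x ^ (m' - i))"
    unfolding Suc by (subst sum.atMost_Suc_shift) simp
  also have "\<dots> = (\<Sum>i\<le>m'. Suc m' * ((m' choose i) * x ^ (m' - i)))"
    by (rule sum.cong[OF refl]) (metis Suc_times_binomial mult.commute mult.assoc)
  also have "\<dots> = Suc m' * (\<Sum>i\<le>m'. (m' choose i) * x ^ (m' - i))"
    by (simp only: sum_distrib_left)
  also have "\<dots> = Suc m' * (x + 1) ^ m'" by (simp only: binom1)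
  finally show ?thesis using Suc by simp
qed

lemma fcount_rec:
  assumes "d \<ge> 1" "m \<ge> 1" "n = d + m"
  shows "(\<Sum>i\<le>m. (m choose i) * fcount (n - 1) (d - 1 + i)) = fcount n d"
proof -
  define x where "x = n - 1"
  have x: "x = d - 1 + m" "x \<ge> 1" using assms by (auto simp: x_def)
  have t: "x * fcount x (d - 1 + i) = (d - 1 + i) * x ^ (m - i)" if "i \<le> m" for i
  proof (cases "i = m")
    case True then show ?thesis using x by (simp add: fcount_def)
  next
    case False
    then have "x - (d - 1 + i) - 1 = m - i - 1" "m - i = Suc (m - i - 1)" using that x by auto
    then show ?thesis using False that x by (simp add: fcount_def)
  qed
  have "x * (\<Sum>i\<le>m. (m choose i) * fcount x (d - 1 + i))
      = (\<Sum>i\<le>m. (m choose i) * (d - 1 + i) * x ^ (m - i))"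
    unfolding sum_distrib_left
  proof (rule sum.cong[OF refl])
    fix i assume "i \<in> {..m}"
    then have "x * fcount x (d - 1 + i) = (d - 1 + i) * x ^ (m - i)" using t by simp
    then show "x * ((m choose i) * fcount x (d - 1 + i)) = (m choose i) * (d - 1 + i) * x ^ (m - i)"
      by (metis mult.left_commute mult.assoc)
  qed
  also have "\<dots> = (d - 1) * (\<Sum>i\<le>m. (m choose i) * x ^ (m - i)) + (\<Sum>i\<le>m. (m choose i) * i * x ^ (m - i))"
    by (simp add: sum_distrib_left sum.distrib algebra_simps)
  also have "\<dots> = (d - 1) * (x + 1) ^ m + m * (x + 1) ^ (m - 1)" by (simp add: binom1 binom2)
  also have "\<dots> = (x + 1) ^ (m - 1) * ((d - 1) * (x + 1) + m)"
    using assms by (cases m) (auto simp: algebra_simps)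
  also have "(d - 1) * (x + 1) + m = d * x" using x assms by (cases d) (auto simp: algebra_simps)
  finally have "x * (\<Sum>i\<le>m. (m choose i) * fcount x (d - 1 + i)) = x * (d * n ^ (m - 1))"
    using x assms by (simp add: algebra_simps)
  then have "(\<Sum>i\<le>m. (m choose i) * fcount x (d - 1 + i)) = d * n ^ (m - 1)" using x(2)
    by (simp only: mult_left_cancel)
  then show ?thesis using assms by (simp add: fcount_def x_def)
qed

lemma forest_card:
  assumes "finite A" "S \<subseteq> A"
  shows "card {p. forest A S p} = fcount (card A) (card S)"
  using assms
proof (induction "card A" arbitrary: A S rule: less_induct)
  case less
  consider "S = A" | "S = {}" "A \<noteq> {}" | s where "s \<in> S" "S \<noteq> A" by blast
  then show ?case
  proof cases
    case 1
    have "{p. forest A S p} = {id}"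
    proof (intro equalityI subsetI)
      fix p assume "p \<in> {p. forest A S p}"
      then have "p v = v" for v using forestD1[of A S p v] 1 by auto
      then show "p \<in> {id}" by (auto simp: fun_eq_iff)
    next
      fix p :: "'a \<Rightarrow> 'a" assume "p \<in> {id}"
      then have "p = id" by simp
      have "(id ^^ 0) v \<in> S" if "v \<in> A" for v using that 1 by simp
      then have "forest A S id" unfolding forest_def using 1 by (intro conjI allI ballI impI exI[of _ 0]) auto
      then show "p \<in> {p. forest A S p}" using \<open>p = id\<close> by simp
    qed
    then show ?thesis using 1 by (simp add: fcount_def)
  next
    case 2
    have "{p. forest A S p} = {}"
    proof (intro equalityI subsetI)
      fix p assume "p \<in> {p. forest A S p}"
      then have fp: "forest A S p" by simp
      obtain v where "v \<in> A" using 2 by blast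
      from forestD3[OF fp this] show "p \<in> {}" using 2 by simp
    qed simp
    then have c: "card {p. forest A S p} = 0" by (simp only: card.empty)
    have "card A \<noteq> 0" using 2 less.prems by simp
    then show ?thesis using 2 c by (simp add: fcount_def)
  next
    case 3
    note fin = less.prems(1)
    have SA: "S \<subseteq> A" by (rule less.prems(2))
    let ?X = "{p. forest A S p}"
    let ?g = "\<lambda>p. {v\<in>A - S. p v = s}"
    have finX: "finite ?X" using forest_finite[OF fin] .
    have finP: "finite (Pow (A - S))" using fin by simp
    have "card ?X = (\<Sum>I\<in>Pow (A - S). card {p\<in>?X. ?g p = I})"
    proof -
      have sub: "?g ` ?X \<subseteq> Pow (A - S)" by auto
      show ?thesis using sum.group[OF finX finP sub, of "\<lambda>_. 1::nat"] by simp
    qed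
    also have "\<dots> = (\<Sum>I\<in>Pow (A - S). fcount (card A - 1) (card S - 1 + card I))"
    proof (rule sum.cong[OF refl])
      fix I assume I: "I \<in> Pow (A - S)"
      have "card {p\<in>?X. ?g p = I} = card {p. forest A S p \<and> ?g p = I}" by simp
      also have "\<dots> = card {q. forest (A - {s}) (S - {s} \<union> I) q}"
        by (rule bij_betw_same_card[OF forest_split_bij]) (use 3 I SA in auto)
      also have "\<dots> = fcount (card (A - {s})) (card (S - {s} \<union> I))"
      proof (rule less.hyps)
        show "card (A - {s}) < card A" using 3 SA fin by (meson card_Diff1_less subsetD)
      qed (use fin I SA 3 in auto)
      also have "card (A - {s}) = card A - 1" using 3 SA by auto
      also have "card (S - {s} \<union> I) = card (S - {s}) + card I"
        by (rule card_Un_disjoint) (use fin SA I finite_subset in \<open>auto intro: finite_subset[of I A]\<close>)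
      also have "card (S - {s}) = card S - 1" using 3 by simp
      finally show "card {p\<in>?X. ?g p = I} = fcount (card A - 1) (card S - 1 + card I)" .
    qed
    also have "\<dots> = (\<Sum>i\<le>card (A - S). (card (A - S) choose i) * fcount (card A - 1) (card S - 1 + i))"
      by (rule sum_pow_card) (use fin in auto)
    also have "\<dots> = fcount (card A) (card S)"
    proof (rule fcount_rec)
      have fS: "finite S" using fin SA finite_subset by blast
      show "1 \<le> card S" using 3 fS by (metis One_nat_def Suc_leI card_gt_0_iff empty_iff)
      have "card S < card A" using 3 SA fin by (meson psubsetI psubset_card_mono)
      moreover have "card (A - S) = card A - card S" using SA fS by (simp add: card_Diff_subset)
      ultimately show "1 \<le> card (A - S)" "card A = card S + card (A - S)" by auto
    qed
    finally show ?thesis .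
  qed
qed



definition tedges :: "'a set \<Rightarrow> 'a \<Rightarrow> ('a \<Rightarrow> 'a) \<Rightarrow> 'a set set" where
  "tedges V r p = {{v, p v} | v. v \<in> V - {r}}"

definition dep :: "('a \<Rightarrow> 'a) \<Rightarrow> 'a \<Rightarrow> 'a \<Rightarrow> nat" where
  "dep p r v = (LEAST k. (p^^k) v = r)"

lemma forest_in:
  assumes "forest V {r} p" "r \<in> V" "v \<in> V"
  shows "p v \<in> V"
  using assms forestD1[OF assms(1)] forestD2[OF assms(1)] by (cases "v = r") auto

lemma forest_reach:
  assumes "forest V {r} p" "v \<in> V"
  shows "\<exists>k. (p^^k) v = r"
  using forestD3[OF assms] by simp

lemma dep_reach:
  assumes "forest V {r} p" "v \<in> V"
  shows "(p^^(dep p r v)) v = r"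
  unfolding dep_def using forest_reach[OF assms] by (rule LeastI_ex)

lemma dep_step:
  assumes "forest V {r} p" "v \<in> V - {r}"
  shows "dep p r v = Suc (dep p r (p v))"
proof -
  let ?k = "dep p r v"
  have k: "(p^^?k) v = r" using dep_reach[OF assms(1)] assms(2) by simp
  have "?k \<noteq> 0" using k assms(2) by (metis DiffE funpow_0 singletonI)
  then obtain k' where k': "?k = Suc k'" by (cases ?k) auto
  have "(p^^k') (p v) = r" using k unfolding k' by (simp add: funpow_Suc_right del: funpow.simps)
  then have le1: "dep p r (p v) \<le> k'" unfolding dep_def by (rule Least_le)
  have "(p^^(dep p r (p v))) (p v) = r" unfolding dep_def by (rule LeastI) (rule \<open>(p^^k') (p v) = r\<close>)
  then have "(p^^(Suc (dep p r (p v)))) v = r" by (simp add: funpow_Suc_right del: funpow.simps)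
  then have "?k \<le> Suc (dep p r (p v))" unfolding dep_def by (rule Least_le)
  then show ?thesis using le1 k' by simp
qed

lemma forest_neq:
  assumes "forest V {r} p" "v \<in> V - {r}"
  shows "p v \<noteq> v"
proof
  assume "p v = v"
  then have "dep p r v = Suc (dep p r v)" using dep_step[OF assms] by simp
  then show False by simp
qed

lemma adj_sym: "adj E a b = adj E b a"
  unfolding adj_def by (simp add: insert_commute)

lemma rtranclp_adj_sym: "(adj E)\<^sup>*\<^sup>* a b \<Longrightarrow> (adj E)\<^sup>*\<^sup>* b a"
proof (induction rule: rtranclp_induct)
  case base then show ?case by simp
next
  case (step y z)
  then have "adj E z y" using adj_sym by metis
  then show ?case using step.IH converse_rtranclp_into_rtranclp[of "adj E" z y a] by blast
qed

lemma tedges_adj: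
  assumes "v \<in> V - {r}"
  shows "adj (tedges V r p) v (p v)"
  using assms unfolding adj_def tedges_def by blast

lemma tedges_adjD:
  assumes "adj (tedges V r p) a b"
  shows "(a \<in> V - {r} \<and> b = p a) \<or> (b \<in> V - {r} \<and> a = p b)"
proof -
  obtain v where v: "v \<in> V - {r}" "{a, b} = {v, p v}" using assms unfolding adj_def tedges_def by blast
  then show ?thesis by (auto simp: doubleton_eq_iff)
qed

lemma tedges_connected_r:
  assumes "forest V {r} p" "v \<in> V"
  shows "(adj (tedges V r p))\<^sup>*\<^sup>* v r"
proof -
  obtain k where "(p^^k) v = r" using forest_reach[OF assms] by blast
  then show ?thesis using assms(2)
  proof (induction k arbitrary: v)
    case 0 then show ?case by simp
  next
    case (Suc k)
    show ?case
    proof (cases "v = r")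
      case True then show ?thesis by simp
    next
      case False
      have "(p^^k) (p v) = r" using Suc.prems by (simp add: funpow_Suc_right del: funpow.simps)
      moreover have "p v \<in> V" using forestD2[OF assms(1), of v] Suc.prems(2) False by simp
      ultimately have "(adj (tedges V r p))\<^sup>*\<^sup>* (p v) r" using Suc.IH by blast
      moreover have "adj (tedges V r p) v (p v)" using False Suc.prems(2) by (intro tedges_adj) simp
      ultimately show ?thesis using converse_rtranclp_into_rtranclp[of "adj (tedges V r p)" v "p v" r] by simp
    qed
  qed
qed

lemma tedges_connected:
  assumes "forest V {r} p"
  shows "connected_graph V (tedges V r p)"
  unfolding connected_graph_def
proof (intro ballI)
  fix u v assume "u \<in> V" "v \<in> V"
  then have "(adj (tedges V r p))\<^sup>*\<^sup>* u r" "(adj (tedges V r p))\<^sup>*\<^sup>* r v"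
    using tedges_connected_r[OF assms, of u] tedges_connected_r[OF assms, of v] rtranclp_adj_sym[of _ v r] by auto
  then show "(adj (tedges V r p))\<^sup>*\<^sup>* u v" by (rule rtranclp_trans)
qed

lemma tedges_simple:
  assumes "forest V {r} p" "r \<in> V"
  shows "simple_graph V (tedges V r p)"
  unfolding simple_graph_def
proof
  fix e assume "e \<in> tedges V r p"
  then obtain v where v: "v \<in> V - {r}" "e = {v, p v}" unfolding tedges_def by blast
  have "p v \<in> V" using forest_in[OF assms] v by simp
  then show "\<exists>u w. u \<in> V \<and> w \<in> V \<and> u \<noteq> w \<and> e = {u, w}"
    using v forest_neq[OF assms(1) v(1)] by (intro exI[of _ v] exI[of _ "p v"]) auto
qed

lemma cyc_adj:
  assumes "is_cycle E cs" "j < length cs"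
  shows "adj E (cs ! j) (cs ! (Suc j mod length cs))"
proof (cases "Suc j < length cs")
  case True then show ?thesis using assms unfolding is_cycle_def by simp
next
  case False
  then have j: "Suc j = length cs" using assms by simp
  have ne: "cs \<noteq> []" using assms by auto
  have "adj E (last cs) (hd cs)" using assms unfolding is_cycle_def by simp
  moreover have "last cs = cs ! j" using ne j proof -
    have "length cs - Suc 0 = j" using j by simp
    then show ?thesis using ne by (simp add: last_conv_nth)
  qed
  moreover have "hd cs = cs ! 0" using ne by (simp add: hd_conv_nth)
  ultimately show ?thesis using j by simp
qed

lemma argmax_nat:
  fixes f :: "nat \<Rightarrow> nat"
  assumes "m > 0"
  shows "\<exists>i<m. \<forall>j<m. f j \<le> f i"
proof -
  let ?M = "Max (f ` {..<m})"
  have "?M \<in> f ` {..<m}" using assms by (intro Max_in) auto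
  then obtain i where "i < m" "f i = ?M" by auto
  moreover have "f j \<le> ?M" if "j < m" for j using that by (intro Max_ge) auto
  ultimately show ?thesis by auto
qed

lemma tedges_acyclic:
  assumes "forest V {r} p"
  shows "acyclic_graph (tedges V r p)"
  unfolding acyclic_graph_def
proof
  assume "\<exists>cs. is_cycle (tedges V r p) cs"
  then obtain cs where cs: "is_cycle (tedges V r p) cs" by blast
  let ?E = "tedges V r p"
  let ?m = "length cs"
  have m3: "?m \<ge> 3" and dist: "distinct cs" using cs unfolding is_cycle_def by auto
  obtain i where i: "i < ?m" and imax: "\<forall>j<?m. dep p r (cs ! j) \<le> dep p r (cs ! i)"
  proof -
    have "?m > 0" using m3 by linarith
    from argmax_nat[OF this, of "\<lambda>j. dep p r (cs ! j)"] show ?thesis using that by blast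
  qed
  define j1 where "j1 = Suc i mod ?m"
  define j2 where "j2 = (if i = 0 then ?m - 1 else i - 1)"
  have m0: "?m > 0" using m3 by linarith
  have j1: "j1 < ?m" unfolding j1_def using m0 by (rule mod_less_divisor)
  have j2: "j2 < ?m" "Suc j2 mod ?m = i" using m3 i by (auto simp: j2_def)
  have j12: "j1 \<noteq> j2"
  proof (cases "Suc i < ?m")
    case True then show ?thesis using m3 by (auto simp: j1_def j2_def)
  next
    case False then have "Suc i = ?m" using i by simp
    then show ?thesis using m3 by (auto simp: j1_def j2_def)
  qed
  have a1: "adj ?E (cs ! i) (cs ! j1)" using cyc_adj[OF cs i] by (simp add: j1_def)
  have a2: "adj ?E (cs ! j2) (cs ! i)" using cyc_adj[OF cs j2(1)] j2(2) by simp
  have b1: "cs ! j1 = p (cs ! i)"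
  proof -
    have "\<not> (cs ! j1 \<in> V - {r} \<and> cs ! i = p (cs ! j1))"
    proof
      assume h: "cs ! j1 \<in> V - {r} \<and> cs ! i = p (cs ! j1)"
      then have "dep p r (cs ! j1) = Suc (dep p r (cs ! i))" using dep_step[OF assms h[THEN conjunct1]] by simp
      then show False using imax[rule_format, OF j1] by simp
    qed
    then show ?thesis using tedges_adjD[OF a1] by blast
  qed
  have b2: "cs ! j2 = p (cs ! i)"
  proof -
    have "\<not> (cs ! j2 \<in> V - {r} \<and> cs ! i = p (cs ! j2))"
    proof
      assume h: "cs ! j2 \<in> V - {r} \<and> cs ! i = p (cs ! j2)"
      then have "dep p r (cs ! j2) = Suc (dep p r (cs ! i))" using dep_step[OF assms h[THEN conjunct1]] by simp
      then show False using imax[rule_format, OF j2(1)] by simp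
    qed
    then show ?thesis using tedges_adjD[OF a2] by blast
  qed
  have "cs ! j1 = cs ! j2" using b1 b2 by simp
  then show False using dist j1 j2 j12 by (simp add: nth_eq_iff_index_eq)
qed

lemma tedges_tree:
  assumes "forest V {r} p" "r \<in> V"
  shows "is_tree V (tedges V r p)"
  unfolding is_tree_def using tedges_simple[OF assms] tedges_connected[OF assms(1)] tedges_acyclic[OF assms(1)]
  by blast



lemma tedges_inj:
  assumes p: "forest V {r} p" and q: "forest V {r} q" and e: "tedges V r p = tedges V r q"
  shows "p = q"
proof -
  have main: "p v = q v" if "v \<in> V - {r}" for v
  proof -
    have "\<forall>v. v \<in> V - {r} \<longrightarrow> dep p r v = n \<longrightarrow> p v = q v" for n
    proof (induction n rule: less_induct)
      case (less n)
      show ?case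
      proof (intro allI impI)
        fix v assume v: "v \<in> V - {r}" and dn: "dep p r v = n"
        have "{v, p v} \<in> tedges V r q" using e v unfolding tedges_def by blast
        then obtain w where w: "w \<in> V - {r}" "{v, p v} = {w, q w}" unfolding tedges_def by blast
        then consider "v = w" "p v = q w" | "v = q w" "p v = w" by (auto simp: doubleton_eq_iff)
        then show "p v = q v"
        proof cases
          case 1 then show ?thesis by simp
        next
          case 2
          have pv: "p v \<in> V - {r}" using w 2 by simp
          have d1: "dep p r v = Suc (dep p r (p v))" using dep_step[OF p v] .
          then have "dep p r (p v) < n" using dn by simp
          then have "p (p v) = q (p v)" using less.IH pv by blast
          then have ppv: "p (p v) = v" using 2 by simp
          have "dep p r (p v) = Suc (dep p r (p (p v)))" using dep_step[OF p pv] .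
          then have "dep p r v = Suc (Suc (dep p r v))" using d1 ppv by simp
          then show ?thesis by simp
        qed
      qed
    qed
    then show ?thesis using that by blast
  qed
  show ?thesis
  proof
    fix v show "p v = q v"
    proof (cases "v \<in> V - {r}")
      case True then show ?thesis by (rule main)
    next
      case False then show ?thesis using forestD1[OF p, of v] forestD1[OF q, of v] by simp
    qed
  qed
qed

lemma simple_path:
  assumes "R\<^sup>*\<^sup>* a b"
  shows "\<exists>xs. xs \<noteq> [] \<and> hd xs = a \<and> last xs = b \<and> distinct xs \<and>
           (\<forall>i. Suc i < length xs \<longrightarrow> R (xs ! i) (xs ! Suc i))"
  using assms
proof (induction rule: rtranclp_induct)
  case base
  show ?case by (intro exI[of _ "[a]"]) simp
next
  case (step y z)
  then obtain xs where xs: "xs \<noteq> []" "hd xs = a" "last xs = y" "distinct xs"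
    "\<forall>i. Suc i < length xs \<longrightarrow> R (xs ! i) (xs ! Suc i)" by blast
  show ?case
  proof (cases "z \<in> set xs")
    case True
    then obtain j where j: "j < length xs" "xs ! j = z" by (auto simp: in_set_conv_nth)
    let ?ys = "take (Suc j) xs"
    have "?ys \<noteq> []" using xs by simp
    moreover have "hd ?ys = a" using xs by simp
    moreover have "last ?ys = z" using j by (simp add: take_Suc_conv_app_nth)
    moreover have "distinct ?ys" using xs by simp
    moreover have "\<forall>i. Suc i < length ?ys \<longrightarrow> R (?ys ! i) (?ys ! Suc i)" using xs(5) by auto
    ultimately show ?thesis by blast
  next
    case False
    let ?ys = "xs @ [z]"
    have "?ys \<noteq> []" by simp
    moreover have "hd ?ys = a" using xs by simp
    moreover have "last ?ys = z" by simp
    moreover have "distinct ?ys" using xs False by simp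
    moreover have "\<forall>i. Suc i < length ?ys \<longrightarrow> R (?ys ! i) (?ys ! Suc i)"
    proof (intro allI impI)
      fix i assume i: "Suc i < length ?ys"
      show "R (?ys ! i) (?ys ! Suc i)"
      proof (cases "Suc i < length xs")
        case True then show ?thesis using xs(5) by (simp add: nth_append)
      next
        case False
        then have "Suc i = length xs" using i by simp
        moreover have "xs ! i = y"
        proof -
          have "length xs - 1 = i" using \<open>Suc i = length xs\<close> by simp
          then show ?thesis using xs(1,3) last_conv_nth[of xs] by simp
        qed
        ultimately show ?thesis using step.hyps(2) by (simp add: nth_append)
      qed
    qed
    ultimately show ?thesis by blast
  qed
qed

lemma simple_edge:
  assumes "simple_graph V E" "{a, b} \<in> E"
  shows "a \<in> V" "b \<in> V" "a \<noteq> b"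
  using assms unfolding simple_graph_def by (auto simp: doubleton_eq_iff)

lemma adj_mono: "E \<subseteq> F \<Longrightarrow> adj E \<le> adj F"
  unfolding adj_def by auto

lemma tree_to_forest:
  assumes t: "is_tree V E" and r: "r \<in> V"
  shows "\<exists>p. forest V {r} p \<and> tedges V r p = E"
proof -
  have sg: "simple_graph V E" and cg: "connected_graph V E" and ac: "acyclic_graph E"
    using t unfolding is_tree_def by auto
  define dist where "dist v = (LEAST k. ((adj E)^^k) v r)" for v
  have dex: "((adj E)^^(dist v)) v r" if "v \<in> V" for v
  proof -
    have "(adj E)\<^sup>*\<^sup>* v r" using cg[unfolded connected_graph_def, rule_format, OF that r] .
    from rtranclp_imp_relpowp[OF this] obtain k where "((adj E)^^k) v r" ..
    then show ?thesis unfolding dist_def by (rule LeastI)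
  qed
  have nb: "\<exists>u. adj E v u \<and> dist u < dist v" if "v \<in> V - {r}" for v
  proof -
    have k: "((adj E)^^(dist v)) v r" using dex that by simp
    have "dist v \<noteq> 0"
    proof
      assume "dist v = 0"
      then have "v = r" using k by simp
      then show False using that by simp
    qed
    then obtain k' where k': "dist v = Suc k'" by (cases "dist v") auto
    then obtain u where u: "adj E v u" "((adj E)^^k') u r" using relpowp_Suc_D2[OF k[unfolded k']] by blast
    have "dist u \<le> k'" unfolding dist_def using u(2) by (rule Least_le)
    then show ?thesis using u k' by auto
  qed
  define p where "p v = (if v \<in> V - {r} then (SOME u. adj E v u \<and> dist u < dist v) else v)" for v
  have pp: "adj E v (p v) \<and> dist (p v) < dist v" if "v \<in> V - {r}" for v
    unfolding p_def using that someI_ex[OF nb[OF that]] by simp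
  have pV: "p v \<in> V" if "v \<in> V - {r}" for v
  proof -
    have "{v, p v} \<in> E" using pp[OF that] unfolding adj_def by simp
    from simple_edge(2)[OF sg this] show ?thesis .
  qed
  have reach: "\<exists>k. (p^^k) v \<in> {r}" if "v \<in> V" for v
  proof -
    have "\<forall>v. v \<in> V \<longrightarrow> dist v = n \<longrightarrow> (\<exists>k. (p^^k) v \<in> {r})" for n
    proof (induction n rule: less_induct)
      case (less n)
      show ?case
      proof (intro allI impI)
        fix v assume v: "v \<in> V" and dn: "dist v = n"
        show "\<exists>k. (p^^k) v \<in> {r}"
        proof (cases "v = r")
          case True
          then have "(p^^0) v \<in> {r}" by simp
          then show ?thesis by blast
        next
          case False
          then have v': "v \<in> V - {r}" using v by simp
          then have "dist (p v) < n" "p v \<in> V" using pp pV dn by auto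
          then obtain k where "(p^^k) (p v) \<in> {r}" using less.IH by blast
          then have "(p^^(Suc k)) v \<in> {r}" by (simp add: funpow_Suc_right del: funpow.simps)
          then show ?thesis by blast
        qed
      qed
    qed
    then show ?thesis using that by blast
  qed
  have fp: "forest V {r} p"
    unfolding forest_def
  proof (intro conjI allI impI ballI)
    fix v assume "v \<notin> V - {r}" then show "p v = v" by (auto simp: p_def)
  next
    fix v assume "v \<in> V - {r}" then show "p v \<in> V" by (rule pV)
  next
    fix v assume "v \<in> V" then show "\<exists>k. (p^^k) v \<in> {r}" by (rule reach)
  qed
  have sub: "tedges V r p \<subseteq> E"
  proof
    fix e assume "e \<in> tedges V r p"
    then obtain v where "v \<in> V - {r}" "e = {v, p v}" unfolding tedges_def by blast
    then show "e \<in> E" using pp[of v] unfolding adj_def by simp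
  qed
  have sup: "E \<subseteq> tedges V r p"
  proof
    fix e assume eE: "e \<in> E"
    then obtain a b where ab: "a \<in> V" "b \<in> V" "a \<noteq> b" "e = {a, b}" using sg unfolding simple_graph_def by blast
    show "e \<in> tedges V r p"
    proof (rule ccontr)
      assume en: "e \<notin> tedges V r p"
      have "(adj (tedges V r p))\<^sup>*\<^sup>* a b" using tedges_connected[OF fp, unfolded connected_graph_def, rule_format, OF ab(1,2)] .
      moreover have "adj (tedges V r p) \<le> adj (E - {e})" using sub en by (intro adj_mono) auto
      ultimately have "(adj (E - {e}))\<^sup>*\<^sup>* a b" using rtranclp_mono[of "adj (tedges V r p)" "adj (E - {e})"] by (auto dest: predicate2D)
      then obtain xs where xs: "xs \<noteq> []" "hd xs = a" "last xs = b" "distinct xs"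
        "\<forall>i. Suc i < length xs \<longrightarrow> adj (E - {e}) (xs ! i) (xs ! Suc i)"
        using simple_path[of "adj (E - {e})" a b] by blast
      have l2: "length xs \<ge> 2"
      proof (rule ccontr)
        assume "\<not> length xs \<ge> 2"
        then have "length xs = 1" using xs(1) by (cases xs) (auto simp: Suc_le_eq)
        then have "hd xs = last xs" by (cases xs) auto
        then show False using xs ab by simp
      qed
      have l3: "length xs \<ge> 3"
      proof (rule ccontr)
        assume "\<not> length xs \<ge> 3"
        then have l: "length xs = 2" using l2 by simp
        then have "xs ! 0 = a" "xs ! 1 = b" using xs(1,2,3) by (auto simp: hd_conv_nth last_conv_nth)
        moreover have "adj (E - {e}) (xs ! 0) (xs ! Suc 0)" using xs(5) l by auto
        ultimately show False using ab unfolding adj_def by simp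
      qed
      have "is_cycle E xs"
        unfolding is_cycle_def
      proof (intro conjI allI impI)
        show "3 \<le> length xs" by (rule l3)
        show "distinct xs" by (rule xs(4))
      next
        fix i assume "Suc i < length xs"
        then have "adj (E - {e}) (xs ! i) (xs ! Suc i)" using xs(5) by blast
        then show "adj E (xs ! i) (xs ! Suc i)" unfolding adj_def by blast
      next
        show "adj E (last xs) (hd xs)" using xs ab eE unfolding adj_def by (simp add: insert_commute)
      qed
      then show False using ac unfolding acyclic_graph_def by blast
    qed
  qed
  show ?thesis using fp sub sup by blast
qed

lemma children_tedges:
  assumes "forest V {r} p"
  shows "children (tedges V r p) r = {c \<in> V - {r}. p c = r}"
proof -
  have "{r, c} \<in> tedges V r p \<longleftrightarrow> c \<in> V - {r} \<and> p c = r" for c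
  proof
    assume "{r, c} \<in> tedges V r p"
    then obtain v where "v \<in> V - {r}" "{r, c} = {v, p v}" unfolding tedges_def by blast
    then show "c \<in> V - {r} \<and> p c = r" by (auto simp: doubleton_eq_iff)
  next
    assume "c \<in> V - {r} \<and> p c = r"
    then show "{r, c} \<in> tedges V r p" unfolding tedges_def by (auto simp: insert_commute)
  qed
  then show ?thesis unfolding children_def by blast
qed



lemma trees_forests_card:
  assumes r: "r \<in> V"
  shows "card {E. is_tree V E \<and> P (children E r)} = card {p. forest V {r} p \<and> P {c \<in> V - {r}. p c = r}}"
proof -
  have "bij_betw (tedges V r) {p. forest V {r} p \<and> P {c \<in> V - {r}. p c = r}} {E. is_tree V E \<and> P (children E r)}"
    unfolding bij_betw_def
  proof
    show "inj_on (tedges V r) {p. forest V {r} p \<and> P {c \<in> V - {r}. p c = r}}"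
    proof (rule inj_onI)
      fix p q assume "p \<in> {p. forest V {r} p \<and> P {c \<in> V - {r}. p c = r}}"
        "q \<in> {p. forest V {r} p \<and> P {c \<in> V - {r}. p c = r}}" "tedges V r p = tedges V r q"
      then show "p = q" using tedges_inj[of V r p q] by simp
    qed
    show "tedges V r ` {p. forest V {r} p \<and> P {c \<in> V - {r}. p c = r}} = {E. is_tree V E \<and> P (children E r)}"
    proof (intro equalityI subsetI)
      fix E assume "E \<in> tedges V r ` {p. forest V {r} p \<and> P {c \<in> V - {r}. p c = r}}"
      then obtain p where p: "forest V {r} p" "P {c \<in> V - {r}. p c = r}" "E = tedges V r p" by blast
      then show "E \<in> {E. is_tree V E \<and> P (children E r)}"
        using tedges_tree[OF p(1) r] children_tedges[OF p(1)] by simp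
    next
      fix E assume "E \<in> {E. is_tree V E \<and> P (children E r)}"
      then have E: "is_tree V E" "P (children E r)" by auto
      obtain p where p: "forest V {r} p" "tedges V r p = E" using tree_to_forest[OF E(1) r] by blast
      then have "P {c \<in> V - {r}. p c = r}" using E(2) children_tedges[OF p(1)] by simp
      then show "E \<in> tedges V r ` {p. forest V {r} p \<and> P {c \<in> V - {r}. p c = r}}" using p by blast
    qed
  qed
  then show ?thesis by (simp add: bij_betw_same_card)
qed

lemma fiber_count:
  assumes "finite V" "r \<in> V" "S \<subseteq> V - {r}"
  shows "card {p. forest V {r} p \<and> {c \<in> V - {r}. p c = r} = S} = fcount (card V - 1) (card S)"
proof -
  have "card {p. forest V {r} p \<and> {c \<in> V - {r}. p c = r} = S} = card {q. forest (V - {r}) ({r} - {r} \<union> S) q}"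
    by (rule bij_betw_same_card[OF forest_split_bij]) (use assms in auto)
  also have "{r} - {r} \<union> S = S" by simp
  also have "card {q. forest (V - {r}) S q} = fcount (card (V - {r})) (card S)"
    using assms by (intro forest_card) auto
  finally show ?thesis using assms by simp
qed

lemma filter_sum:
  assumes "finite V" "r \<in> V"
  shows "card {p. forest V {r} p \<and> P {c \<in> V - {r}. p c = r}}
       = (\<Sum>S\<in>{S\<in>Pow (V - {r}). P S}. card {p. forest V {r} p \<and> {c \<in> V - {r}. p c = r} = S})"
proof -
  let ?g = "\<lambda>p. {c \<in> V - {r}. p c = r}"
  let ?X = "{p. forest V {r} p \<and> P (?g p)}"
  let ?T = "{S\<in>Pow (V - {r}). P S}"
  have finX: "finite ?X" using forest_finite[OF assms(1), of "{r}"] by (rule finite_subset[rotated]) auto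
  have finT: "finite ?T" using assms by simp
  have sub: "?g ` ?X \<subseteq> ?T" by auto
  have "card ?X = (\<Sum>S\<in>?T. card {p\<in>?X. ?g p = S})"
    using sum.group[OF finX finT sub, of "\<lambda>_. 1::nat"] by simp
  also have "\<dots> = (\<Sum>S\<in>?T. card {p. forest V {r} p \<and> ?g p = S})"
    by (rule sum.cong[OF refl]) (rule arg_cong[where f = card], auto)
  finally show ?thesis .
qed

lemma split_count:
  fixes r n k l :: nat
  assumes "r \<in> {1..n+1}"
  shows "card {S\<in>Pow ({1..n+1} - {r}). card {c\<in>S. c < r} = k \<and> card {c\<in>S. c > r} = l}
       = ((r - 1) choose k) * ((n + 1 - r) choose l)"
proof -
  let ?T = "{S\<in>Pow ({1..n+1} - {r}). card {c\<in>S. c < r} = k \<and> card {c\<in>S. c > r} = l}"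
  let ?L = "{1..<r}" and ?U = "{r<..n+1}"
  let ?P = "{A. A \<subseteq> ?L \<and> card A = k} \<times> {B. B \<subseteq> ?U \<and> card B = l}"
  have "bij_betw (\<lambda>S. ({c\<in>S. c < r}, {c\<in>S. c > r})) ?T ?P"
  proof (rule bij_betw_byWitness[where f' = "\<lambda>(A, B). A \<union> B"])
    show "\<forall>S\<in>?T. (\<lambda>(A, B). A \<union> B) ({c\<in>S. c < r}, {c\<in>S. c > r}) = S" by auto
    show "\<forall>AB\<in>?P. (\<lambda>S. ({c\<in>S. c < r}, {c\<in>S. c > r})) ((\<lambda>(A, B). A \<union> B) AB) = AB"
    proof
      fix AB assume "AB \<in> ?P"
      then obtain A B where AB: "AB = (A, B)" "A \<subseteq> ?L" "B \<subseteq> ?U" by auto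
      have "{c \<in> A \<union> B. c < r} = A" "{c \<in> A \<union> B. c > r} = B" using AB by auto
      then show "(\<lambda>S. ({c\<in>S. c < r}, {c\<in>S. c > r})) ((\<lambda>(A, B). A \<union> B) AB) = AB" using AB by simp
    qed
    show "(\<lambda>S. ({c\<in>S. c < r}, {c\<in>S. c > r})) ` ?T \<subseteq> ?P" by auto
    show "(\<lambda>(A, B). A \<union> B) ` ?P \<subseteq> ?T"
    proof
      fix S assume "S \<in> (\<lambda>(A, B). A \<union> B) ` ?P"
      then obtain A B where AB: "S = A \<union> B" "A \<subseteq> ?L" "B \<subseteq> ?U" "card A = k" "card B = l" by auto
      have "{c \<in> A \<union> B. c < r} = A" "{c \<in> A \<union> B. c > r} = B" using AB by auto
      moreover have "S \<subseteq> {1..n+1} - {r}"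
      proof
        fix x assume "x \<in> S"
        then have "x \<in> ?L \<or> x \<in> ?U" using AB(1-3) by blast
        then show "x \<in> {1..n+1} - {r}" using assms by auto
      qed
      ultimately show "S \<in> ?T" using AB by auto
    qed
  qed
  then have "card ?T = card ?P" by (rule bij_betw_same_card)
  also have "\<dots> = ((r - 1) choose k) * ((n + 1 - r) choose l)"
    by (simp add: card_cartesian_product n_subsets)
  finally show ?thesis .
qed

lemma vand2: "(\<Sum>j\<le>n. (j choose k) * ((n - j) choose l)) = (Suc n choose (k + l + 1))"
proof (induction n arbitrary: l)
  case 0 then show ?case by (cases k; cases l) auto
next
  case (Suc n)
  show ?case
  proof (cases l)
    case 0
    then show ?thesis using sum_choose_upper[of k "Suc n"] by simp
  next
    case (Suc l')
    have "(\<Sum>j\<le>Suc n. (j choose k) * ((Suc n - j) choose l))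
        = (\<Sum>j\<le>n. (j choose k) * ((Suc n - j) choose l))" using Suc by simp
    also have "\<dots> = (\<Sum>j\<le>n. (j choose k) * ((n - j) choose l') + (j choose k) * ((n - j) choose l))"
    proof (rule sum.cong[OF refl])
      fix j assume "j \<in> {..n}"
      then have "Suc n - j = Suc (n - j)" by simp
      then show "(j choose k) * ((Suc n - j) choose l) = (j choose k) * ((n - j) choose l') + (j choose k) * ((n - j) choose l)"
        using Suc by (simp add: algebra_simps)
    qed
    also have "\<dots> = (Suc n choose (k + l' + 1)) + (Suc n choose (k + l + 1))"
      by (simp add: sum.distrib Suc.IH)
    also have "\<dots> = Suc (Suc n) choose (k + l + 1)" using Suc by simp
    finally show ?thesis .
  qed
qed



lemma per_root:
  fixes n k l r :: nat
  assumes r: "r \<in> {1..n+1}"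
  shows "card {E. is_tree {1..n+1} E \<and> card {c \<in> children E r. c < r} = k \<and> card {c \<in> children E r. c > r} = l}
       = ((r - 1) choose k) * ((n + 1 - r) choose l) * fcount n (k + l)"
proof -
  let ?V = "{1..n+1::nat}"
  let ?P = "\<lambda>C. card {c \<in> C. c < r} = k \<and> card {c \<in> C. c > r} = l"
  let ?T = "{S\<in>Pow (?V - {r}). ?P S}"
  have fin: "finite ?V" by simp
  have "card {E. is_tree ?V E \<and> ?P (children E r)} = card {p. forest ?V {r} p \<and> ?P {c \<in> ?V - {r}. p c = r}}"
    by (rule trees_forests_card[OF r])
  also have "\<dots> = (\<Sum>S\<in>?T. card {p. forest ?V {r} p \<and> {c \<in> ?V - {r}. p c = r} = S})"
    by (rule filter_sum[OF fin r])
  also have "\<dots> = (\<Sum>S\<in>?T. fcount n (k + l))"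
  proof (rule sum.cong[OF refl])
    fix S assume S: "S \<in> ?T"
    then have Ssub: "S \<subseteq> ?V - {r}" by simp
    have "card {p. forest ?V {r} p \<and> {c \<in> ?V - {r}. p c = r} = S} = fcount (card ?V - 1) (card S)"
      by (rule fiber_count[OF fin r Ssub])
    moreover have "card S = k + l"
    proof -
      have fS: "finite S" using Ssub finite_subset fin by blast
      have "S = {c \<in> S. c < r} \<union> {c \<in> S. c > r}" using Ssub by auto
      then have "card S = card ({c \<in> S. c < r} \<union> {c \<in> S. c > r})" by simp
      also have "\<dots> = card {c \<in> S. c < r} + card {c \<in> S. c > r}"
        by (rule card_Un_disjoint) (use fS in auto)
      finally show ?thesis using S by simp
    qed
    ultimately show "card {p. forest ?V {r} p \<and> {c \<in> ?V - {r}. p c = r} = S} = fcount n (k + l)" by simp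
  qed
  also have "\<dots> = card ?T * fcount n (k + l)" by simp
  also have "card ?T = ((r - 1) choose k) * ((n + 1 - r) choose l)" by (rule split_count[OF r])
  finally show ?thesis by simp
qed

lemma total_count:
  fixes n k l :: nat
  shows "card {(E, r) \<in> rooted_trees {1..n+1}.
                 card {c \<in> children E r. c < r} = k \<and>
                 card {c \<in> children E r. c > r} = l}
       = ((n + 1) choose (k + l + 1)) * fcount n (k + l)"
proof -
  let ?V = "{1..n+1::nat}"
  let ?Q = "\<lambda>E r. card {c \<in> children E r. c < r} = k \<and> card {c \<in> children E r. c > r} = l"
  let ?B = "\<lambda>r. {E. is_tree ?V E \<and> ?Q E r}"
  have eq: "{(E, r) \<in> rooted_trees ?V. ?Q E r} = (\<lambda>(r, E). (E, r)) ` (SIGMA r:?V. ?B r)"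
    unfolding rooted_trees_def by auto
  have inj: "inj_on (\<lambda>(r, E). (E, r)) (SIGMA r:?V. ?B r)" by (auto simp: inj_on_def)
  have finB: "finite (?B r)" for r
  proof (rule finite_subset)
    show "?B r \<subseteq> Pow (Pow ?V)"
    proof
      fix E assume "E \<in> ?B r"
      then have "simple_graph ?V E" unfolding is_tree_def by simp
      have "e \<subseteq> ?V" if "e \<in> E" for e
      proof -
        obtain u v where "u \<in> ?V" "v \<in> ?V" "e = {u, v}"
          using \<open>simple_graph ?V E\<close> \<open>e \<in> E\<close> unfolding simple_graph_def by blast
        then show ?thesis by simp
      qed
      then show "E \<in> Pow (Pow ?V)" by blast
    qed
  qed simp
  have "card {(E, r) \<in> rooted_trees ?V. ?Q E r} = card (SIGMA r:?V. ?B r)"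
    unfolding eq by (rule card_image[OF inj])
  also have "\<dots> = (\<Sum>r\<in>?V. card (?B r))" using finB by simp
  also have "\<dots> = (\<Sum>r\<in>?V. ((r - 1) choose k) * ((n + 1 - r) choose l) * fcount n (k + l))"
    by (rule sum.cong[OF refl]) (rule per_root)
  also have "\<dots> = (\<Sum>r\<in>?V. ((r - 1) choose k) * ((n + 1 - r) choose l)) * fcount n (k + l)"
    by (simp only: sum_distrib_right)
  also have "(\<Sum>r\<in>?V. ((r - 1) choose k) * ((n + 1 - r) choose l)) = (\<Sum>j\<le>n. (j choose k) * ((n - j) choose l))"
  proof -
    have "?V = {Suc 0..Suc n}" by simp
    then have "(\<Sum>r\<in>?V. ((r - 1) choose k) * ((n + 1 - r) choose l))
        = (\<Sum>j\<in>{0..n}. ((Suc j - 1) choose k) * ((n + 1 - Suc j) choose l))"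
      by (simp only: sum.atLeast_Suc_atMost_Suc_shift comp_def)
    also have "\<dots> = (\<Sum>j\<le>n. (j choose k) * ((n - j) choose l))" by (simp add: atLeast0AtMost)
    finally show ?thesis .
  qed
  also have "\<dots> = (n + 1) choose (k + l + 1)" using vand2 by simp
  finally show ?thesis .
qed



theorem mainTheorem1:
  fixes n k l :: nat
  assumes "n \<ge> 1" and "k + l \<le> n"
  shows "real (card {(E, r) \<in> rooted_trees {1..n+1}.
                 card {c \<in> children E r. c < r} = k \<and>
                 card {c \<in> children E r. c > r} = l})
         = real ((n + 1) choose (k + l + 1)) * real (k + l)
           * real n powi (int n - int k - int l - 1)"
proof -
  have f: "real (fcount n (k + l)) = real (k + l) * real n powi (int n - int k - int l - 1)"
  proof (cases "k + l = n")
    case True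
    then have e: "int n - int k - int l - 1 = -1" by simp
    have "real n \<noteq> 0" using assms by simp
    then show ?thesis using True by (simp only: e power_int_minus1_right) (simp add: fcount_def)
  next
    case False
    then have e: "int n - int k - int l - 1 = int (n - (k + l) - 1)" using assms by simp
    show ?thesis using False by (simp only: e power_int_of_nat) (simp add: fcount_def)
  qed
  show ?thesis unfolding total_count using f by simp
qed

end
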